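(* Let $N\ge1$, $f:\mathbb{N}^N\to\mathbb{N}$, $p$ a prime, and $k=\sum_{j=0}^r k_jp^j$ with $0\le k_j<p$. Let $\boldsymbol{\ell}\in\mathbb{N}^N$. Then $$\binom{k}{\boldsymbol{\ell}}_f\equiv\sum_{(\mathbf{m}_0,\dots,\mathbf{m}_r)}\prod_{i=0}^r\binom{k_i}{\mathbf{m}_i}_f\pmod p,$$ where the sum is over all $(\mathbf{m}_0,\dots,\mathbf{m}_r)\in(\mathbb{N}^N)^{r+1}$ with $\mathbf{m}_0+\mathbf{m}_1p+\cdots+\mathbf{m}_rp^r=\boldsymbol{\ell}$.
   Context: $\mathbb{N}=\{0,1,2,\dots\}$. For $k\ge0$ and $\mathbf{x}\in\mathbb{N}^N$, $\binom{k}{\mathbf{x}}_f=\sum_{\mathbf{m}_1+\cdots+\mathbf{m}_k=\mathbf{x}} f(\mathbf{m}_1)\cdots f(\mathbf{m}_k)$ over tuples of vectors in $\mathbb{N}^N$. *)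

theory Defs
  imports Main "HOL-Number_Theory.Cong" "HOL-Computational_Algebra.Primes"
begin

text \<open>Vectors in \<open>\<nat>^N\<close> are represented as lists of naturals of length N.
  Componentwise sum of a list of such vectors (the empty sum is the zero vector):\<close>
definition vsum :: "nat \<Rightarrow> nat list list \<Rightarrow> nat list" where
  "vsum N ms = map (\<lambda>i. \<Sum>m\<leftarrow>ms. m ! i) [0..<N]"

definition vscale :: "nat \<Rightarrow> nat list \<Rightarrow> nat list" where
  "vscale c v = map (\<lambda>a. c * a) v"

definition natvecs :: "nat \<Rightarrow> nat list set" where
  "natvecs N = {v. length v = N}"

text \<open>Generalized multinomial coefficient
  \<open>binom k x _f = \<Sum>_{m_1+...+m_k = x} f(m_1)...f(m_k)\<close>, the sum over k-tuples of vectors in \<open>\<nat>^N\<close>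
  (k-tuples represented as lists of length k).\<close>
definition gbinom :: "nat \<Rightarrow> (nat list \<Rightarrow> nat) \<Rightarrow> nat \<Rightarrow> nat list \<Rightarrow> nat" where
  "gbinom N f k x =
     (\<Sum>ms \<in> {ms. length ms = k \<and> set ms \<subseteq> natvecs N \<and> vsum N ms = x}.
        \<Prod>m\<leftarrow>ms. f m)"

end

theory Submission imports Defs "HOL-Number_Theory.Number_Theory" begin


lemma funpow_mod:
  assumes "(\<sigma>^^p) s = s"
  shows "(\<sigma>^^(p*q + r)) s = (\<sigma>^^r) s"
proof (induction q)
  case 0 then show ?case by simp
next
  case (Suc q)
  have e: "p*Suc q + r = (p*q + r) + p" by simp
  have "(\<sigma>^^(p*Suc q + r)) s = (\<sigma>^^(p*q + r)) ((\<sigma>^^p) s)"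
    unfolding e by (simp only: funpow_add o_apply)
  then show ?case using Suc assms by simp
qed

lemma funpow_mod':
  assumes "(\<sigma>^^p) s = s" "p > 0"
  shows "(\<sigma>^^n) s = (\<sigma>^^(n mod p)) s"
  using funpow_mod[OF assms(1), of "n div p" "n mod p"] by simp

lemma funpow_into: "\<sigma> ` T \<subseteq> T \<Longrightarrow> s \<in> T \<Longrightarrow> (\<sigma>^^n) s \<in> T"
  by (induction n) auto

lemma orbit_free:
  fixes \<sigma> :: "'a \<Rightarrow> 'a" and w :: "'a \<Rightarrow> nat"
  assumes "prime p" "finite T" "\<sigma> ` T \<subseteq> T" "\<forall>s\<in>T. (\<sigma>^^p) s = s \<and> \<sigma> s \<noteq> s"
    "\<forall>s\<in>T. w (\<sigma> s) = w s"
  shows "p dvd sum w T"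
  using assms(2-)
proof (induction "card T" arbitrary: T rule: less_induct)
  case less
  show ?case
  proof (cases "T = {}")
    case True then show ?thesis by simp
  next
    case False
    then obtain s where s: "s \<in> T" by auto
    have p0: "p > 0" using assms(1) prime_gt_0_nat by blast
    have sp: "(\<sigma>^^p) s = s" using less s by auto
    define Orb where "Orb = (\<lambda>j. (\<sigma>^^j) s) ` {..<p}"
    have OrbT: "Orb \<subseteq> T" unfolding Orb_def using funpow_into[OF less(3) s] by auto
    have wit: "w ((\<sigma>^^j) s) = w s" for j
    proof (induction j)
      case (Suc j)
      have "(\<sigma>^^j) s \<in> T" using funpow_into[OF less(3) s] .
      then show ?case using Suc less(5) by simp
    qed simp
    have inj: "inj_on (\<lambda>j. (\<sigma>^^j) s) {..<p}"
    proof (rule inj_onI, rule ccontr)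
      fix i j assume ij: "i \<in> {..<p}" "j \<in> {..<p}" "(\<sigma>^^i) s = (\<sigma>^^j) s" "i \<noteq> j"
      have gen: "\<exists>d. 0 < d \<and> d < p \<and> (\<sigma>^^d) s = s"
        if "i < j" "i < p" "j < p" "(\<sigma>^^i) s = (\<sigma>^^j) s" for i j
      proof -
        have "(\<sigma>^^(p - i)) ((\<sigma>^^i) s) = (\<sigma>^^(p - i)) ((\<sigma>^^j) s)" using that by simp
        hence "(\<sigma>^^(p - i + i)) s = (\<sigma>^^(p - i + j)) s" by (simp add: funpow_add)
        hence "s = (\<sigma>^^(p + (j - i))) s" using that sp by simp
        also have "\<dots> = (\<sigma>^^(j-i)) s" using funpow_mod[OF sp, of 1 "j-i"] by simp
        finally show ?thesis using that by (intro exI[of _ "j-i"]) auto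
      qed
      obtain d where d: "0 < d" "d < p" "(\<sigma>^^d) s = s"
        using ij gen[of i j] gen[of j i] by (cases "i < j") auto
      have cop: "gcd d p = 1"
      proof -
        have "\<not> p dvd d" by (rule nat_dvd_not_less[OF d(1) d(2)])
        hence "coprime p d" by (rule prime_imp_coprime[OF assms(1)])
        hence "coprime d p" by (simp only: coprime_commute)
        thus ?thesis by (simp only: coprime_iff_gcd_eq_1)
      qed
      obtain x y where xy: "d * x = p * y + 1" using bezout_nat[of d p] d cop by auto
      have dx: "(\<sigma>^^(d*n)) s = s" for n
      proof (induction n)
        case (Suc n)
        have e: "d * Suc n = d*n + d" by simp
        show ?case unfolding e by (simp only: funpow_add o_apply d(3) Suc)
      qed simp
      have "\<sigma> s = (\<sigma>^^1) s" by simp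
      also have "\<dots> = (\<sigma>^^(p*y + 1)) s" by (rule funpow_mod[OF sp, symmetric])
      also have "\<dots> = (\<sigma>^^(d*x)) s" by (simp only: xy)
      also have "\<dots> = s" by (rule dx)
      finally have "\<sigma> s = s" .
      then show False using less(4) s by auto
    qed
    have cardOrb: "card Orb = p" unfolding Orb_def using card_image[OF inj] by simp
    have sumOrb: "sum w Orb = p * w s"
      unfolding Orb_def by (subst sum.reindex[OF inj]) (simp add: wit)
    define T' where "T' = T - Orb"
    have fin: "finite T'" using less by (simp add: T'_def)
    have inv: "\<sigma> ` T' \<subseteq> T'"
    proof
      fix u assume "u \<in> \<sigma> ` T'"
      then obtain t where t: "t \<in> T'" "u = \<sigma> t" by auto
      have tT: "t \<in> T" "t \<notin> Orb" using t by (auto simp: T'_def)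
      have uT: "u \<in> T" using t tT less(3) by auto
      show "u \<in> T'"
      proof (rule ccontr)
        assume "u \<notin> T'"
        with uT have "u \<in> Orb" by (auto simp: T'_def)
        then obtain j where j: "j < p" "u = (\<sigma>^^j) s" by (auto simp: Orb_def)
        have "t = (\<sigma>^^p) t" using less tT by auto
        also have "\<dots> = (\<sigma>^^(Suc (p - 1))) t" using p0 by simp
        also have "\<dots> = (\<sigma>^^(p - 1)) (\<sigma> t)" by (simp only: funpow_Suc_right o_apply)
        also have "\<dots> = (\<sigma>^^(p - 1 + j)) s" unfolding funpow_add o_apply using j t by simp
        also have "\<dots> = (\<sigma>^^((p - 1 + j) mod p)) s" by (rule funpow_mod'[OF sp p0])
        finally have "t \<in> Orb" unfolding Orb_def using p0 by auto
        with tT show False by simp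
      qed
    qed
    have fO: "finite Orb" using OrbT less(2) finite_subset by blast
    have "card T' = card T - card Orb" unfolding T'_def by (rule card_Diff_subset[OF fO OrbT])
    moreover have "card Orb \<le> card T" by (rule card_mono[OF less(2) OrbT])
    ultimately have "card T' < card T" using cardOrb p0 by linarith
    hence IH: "p dvd sum w T'" using less(1)[OF _ fin inv] less(4,5) by (auto simp: T'_def)
    have "sum w T = sum w Orb + sum w T'" unfolding T'_def
      using sum.subset_diff[OF OrbT less(2), of w] by simp
    then show ?thesis using IH sumOrb by simp
  qed
qed

lemma orbit_cong:
  fixes \<sigma> :: "'a \<Rightarrow> 'a" and w :: "'a \<Rightarrow> nat"
  assumes "prime p" "finite S" "\<sigma> ` S \<subseteq> S" "\<forall>s\<in>S. (\<sigma>^^p) s = s"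
    "\<forall>s\<in>S. w (\<sigma> s) = w s"
  shows "[sum w S = sum w {s\<in>S. \<sigma> s = s}] (mod p)"
proof -
  define T where "T = {s\<in>S. \<sigma> s \<noteq> s}"
  have p0: "p > 0" using assms(1) prime_gt_0_nat by blast
  have inv: "\<sigma> ` T \<subseteq> T"
  proof
    fix u assume "u \<in> \<sigma> ` T"
    then obtain s where s: "s \<in> T" "u = \<sigma> s" by auto
    have "\<sigma> u \<noteq> u"
    proof
      assume h: "\<sigma> u = u"
      have "(\<sigma>^^n) u = u" for n by (induction n) (use h in auto)
      hence "(\<sigma>^^(p-1)) (\<sigma> s) = \<sigma> s" using s by simp
      hence "(\<sigma>^^(Suc (p-1))) s = \<sigma> s" by (simp only: funpow_Suc_right o_apply)
      hence "(\<sigma>^^p) s = \<sigma> s" using p0 by simp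
      then show False using s assms(4) by (auto simp: T_def)
    qed
    then show "u \<in> T" using s assms(3) by (auto simp: T_def)
  qed
  have fT: "finite T" using assms(2) by (simp add: T_def)
  have "\<forall>s\<in>T. (\<sigma>^^p) s = s \<and> \<sigma> s \<noteq> s" using assms(4) by (simp add: T_def)
  moreover have "\<forall>s\<in>T. w (\<sigma> s) = w s" using assms(5) by (simp add: T_def)
  ultimately have "p dvd sum w T"
    using orbit_free[OF assms(1) fT inv] by blast
  moreover have "sum w S = sum w {s\<in>S. \<sigma> s = s} + sum w T"
  proof -
    have U: "S = {s\<in>S. \<sigma> s = s} \<union> T" by (auto simp: T_def)
    have D: "{s\<in>S. \<sigma> s = s} \<inter> T = {}" by (auto simp: T_def)
    have "sum w S = sum w ({s\<in>S. \<sigma> s = s} \<union> T)" using U by simp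
    also have "\<dots> = sum w {s\<in>S. \<sigma> s = s} + sum w T"
      by (rule sum.union_disjoint) (use assms(2) fT D in auto)
    finally show ?thesis .
  qed
  ultimately show ?thesis by (auto simp: cong_def elim!: dvdE)
qed



definition box :: "nat \<Rightarrow> nat list \<Rightarrow> nat list set" where
  "box N L = {v. length v = N \<and> (\<forall>j<N. v!j \<le> L!j)}"
definition BL :: "nat \<Rightarrow> nat list \<Rightarrow> nat \<Rightarrow> nat list list set" where
  "BL N L n = {ms. length ms = n \<and> set ms \<subseteq> box N L}"
definition cs :: "nat list list \<Rightarrow> nat \<Rightarrow> nat" where
  "cs ms j = (\<Sum>m\<leftarrow>ms. m!j)"

lemma finite_box: "finite (box N L)"
proof -
  define M where "M = Max ((\<lambda>j. L!j) ` {..<N})"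
  have "box N L \<subseteq> {v. set v \<subseteq> {..M} \<and> length v = N}"
  proof
    fix v assume v: "v \<in> box N L"
    have "set v \<subseteq> {..M}"
    proof
      fix y assume "y \<in> set v"
      then obtain j where j: "j < length v" "y = v!j" by (auto simp: in_set_conv_nth)
      have "j < N" using v j by (simp add: box_def)
      hence "L!j \<le> M" unfolding M_def by (intro Max_ge) auto
      moreover have "v!j \<le> L!j" using v \<open>j<N\<close> by (simp add: box_def)
      ultimately show "y \<in> {..M}" using j by simp
    qed
    then show "v \<in> {v. set v \<subseteq> {..M} \<and> length v = N}" using v by (simp add: box_def)
  qed
  moreover have "finite {v. set v \<subseteq> {..M} \<and> length v = N}"
    by (rule finite_lists_length_eq) simp
  ultimately show ?thesis by (rule finite_subset)
qed

lemma finite_BL: "finite (BL N L n)"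
  unfolding BL_def using finite_lists_length_eq[OF finite_box, of N L n] by (simp add: conj_commute)

lemma vsum_length[simp]: "length (vsum N ms) = N"
  by (simp add: vsum_def)

lemma vsum_nth: "j < N \<Longrightarrow> vsum N ms ! j = cs ms j"
  by (simp add: vsum_def cs_def)

lemma vsum_eq: "length x = N \<Longrightarrow> (vsum N ms = x) = (\<forall>j<N. cs ms j = x!j)"
  by (auto simp: list_eq_iff_nth_eq vsum_nth)

lemma cs_ge: "m \<in> set ms \<Longrightarrow> m!j \<le> cs ms j"
  unfolding cs_def by (rule member_le_sum_list) auto

lemma cs_append[simp]: "cs (a @ b) j = cs a j + cs b j"
  by (simp add: cs_def)

lemma sum_list_rotate: "sum_list (rotate n (xs::'a::comm_monoid_add list)) = sum_list xs"
  by (metis append_take_drop_id rotate_drop_take sum_list_append add.commute)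

lemma prod_list_rotate: "prod_list (rotate n (xs::'a::comm_monoid_mult list)) = prod_list xs"
  by (metis append_take_drop_id rotate_drop_take prod_list.append mult.commute)

lemma cs_rotate[simp]: "cs (rotate n ms) j = cs ms j"
  by (simp add: cs_def rotate_map[symmetric] sum_list_rotate)

lemma cs_rep[simp]: "cs (concat (replicate p w)) j = p * cs w j"
  by (induction p) (auto simp: cs_def)

lemma prod_rep: "prod_list (map f (concat (replicate p w))) = prod_list (map f w) ^ p"
  by (induction p) auto

lemma gbinom_box:
  assumes "x \<in> box N L"
  shows "gbinom N f c x = (\<Sum>ms\<in>BL N L c. if \<forall>j<N. cs ms j = x!j then prod_list (map f ms) else 0)"
proof -
  have lx: "length x = N" using assms by (simp add: box_def)
  have "{ms. length ms = c \<and> set ms \<subseteq> natvecs N \<and> vsum N ms = x} = {ms\<in>BL N L c. \<forall>j<N. cs ms j = x!j}"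
  proof (rule subset_antisym; rule subsetI)
    fix ms assume "ms \<in> {ms. length ms = c \<and> set ms \<subseteq> natvecs N \<and> vsum N ms = x}"
    hence ms: "length ms = c" "set ms \<subseteq> natvecs N" "\<forall>j<N. cs ms j = x!j"
      using vsum_eq[OF lx] by auto
    have "set ms \<subseteq> box N L"
    proof
      fix m assume m: "m \<in> set ms"
      have "\<forall>j<N. m!j \<le> L!j"
      proof (intro allI impI)
        fix j assume j: "j < N"
        have "m!j \<le> cs ms j" by (rule cs_ge[OF m])
        also have "\<dots> = x!j" using ms(3) j by simp
        also have "\<dots> \<le> L!j" using assms j by (simp add: box_def)
        finally show "m!j \<le> L!j" .
      qed
      then show "m \<in> box N L" using m ms(2) by (auto simp: box_def natvecs_def)
    qed
    then show "ms \<in> {ms\<in>BL N L c. \<forall>j<N. cs ms j = x!j}" using ms by (simp add: BL_def)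
  next
    fix ms assume "ms \<in> {ms\<in>BL N L c. \<forall>j<N. cs ms j = x!j}"
    then show "ms \<in> {ms. length ms = c \<and> set ms \<subseteq> natvecs N \<and> vsum N ms = x}"
      using vsum_eq[OF lx] by (auto simp: BL_def box_def natvecs_def)
  qed
  then show ?thesis unfolding gbinom_def
    by (simp add: sum.inter_filter[OF finite_BL])
qed

lemma nth_concat_rep: "length w = a \<Longrightarrow> i < p * a \<Longrightarrow> concat (replicate p w) ! i = w ! (i mod a)"
proof (induction p arbitrary: i)
  case (Suc p)
  show ?case
  proof (cases "i < a")
    case True then show ?thesis using Suc.prems by (simp add: nth_append)
  next
    case False
    then have "concat (replicate p w) ! (i - a) = w ! ((i - a) mod a)"
      using Suc by auto
    moreover have "(i - a) mod a = i mod a" using False by (simp add: le_mod_geq)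
    ultimately show ?thesis using False Suc.prems by (simp add: nth_append)
  qed
qed simp

lemma rot_rep: "length w = a \<Longrightarrow> rotate a (concat (replicate p w)) = concat (replicate p w)"
proof (cases p)
  case (Suc q)
  assume "length w = a"
  then have "rotate a (concat (replicate p w)) = concat (replicate q w) @ w"
    using Suc rotate_append[of w "concat (replicate q w)"] by simp
  also have "\<dots> = concat (replicate q w @ [w])" by simp
  also have "\<dots> = concat (replicate p w)" using Suc by (simp add: replicate_append_same)
  finally show ?thesis .
qed simp

lemma rot_fixed:
  assumes "length d = p * a" "rotate a d = d" "p > 0"
  shows "d = concat (replicate p (take a d))"
proof (cases "a = 0")
  case True then show ?thesis using assms by simp
next
  case False
  have step: "d ! (i + a) = d ! i" if "i + a < p * a" for i
  proof -
    have "d ! i = rotate a d ! i" using assms(2) by simp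
    also have "\<dots> = d ! ((a + i) mod length d)" using that assms(1) by (simp add: nth_rotate)
    also have "\<dots> = d ! (i + a)" using that assms(1) by (simp add: add.commute)
    finally show ?thesis by simp
  qed
  have per: "d ! i = d ! (i mod a)" if "i < p * a" for i
    using that
  proof (induction i rule: less_induct)
    case (less i)
    show ?case
    proof (cases "i < a")
      case True then show ?thesis by simp
    next
      case False
      have "d ! i = d ! ((i - a) + a)" using False by simp
      also have "\<dots> = d ! (i - a)" using step[of "i - a"] False less.prems by simp
      also have "\<dots> = d ! ((i - a) mod a)"
        by (rule less.IH) (use False \<open>a \<noteq> 0\<close> less.prems in auto)
      also have "(i - a) mod a = i mod a" using False by (simp add: le_mod_geq)
      finally show ?thesis .
    qed
  qed
  have "a \<le> p * a" using assms(3) by simp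
  hence la: "length (take a d) = a" using assms(1) by simp
  show ?thesis
  proof (rule nth_equalityI)
    show "length d = length (concat (replicate p (take a d)))"
      using la assms(1) by (simp add: length_concat sum_list_replicate)
  next
    fix i assume "i < length d"
    then have i: "i < p * a" using assms(1) by simp
    have "concat (replicate p (take a d)) ! i = take a d ! (i mod a)"
      by (rule nth_concat_rep[OF la i])
    also have "\<dots> = d ! (i mod a)" using \<open>a \<noteq> 0\<close> by simp
    finally show "d ! i = concat (replicate p (take a d)) ! i" using per[OF i] by simp
  qed
qed



lemma pow_p_cong: "prime p \<Longrightarrow> [(b::nat) ^ p = b] (mod p)"
proof (cases "p dvd b")
  case True
  assume p: "prime p"
  have "b dvd b ^ p" using p prime_gt_0_nat by (intro dvd_power) auto
  hence "p dvd b ^ p" using True by (rule dvd_trans[rotated])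
  then show ?thesis using True by (simp add: cong_def dvd_eq_mod_eq_0)
next
  case False
  assume p: "prime p"
  have "[b ^ (p - 1) = 1] (mod p)" by (rule fermat_theorem[OF p False])
  hence "[b ^ (p - 1) * b = 1 * b] (mod p)" by (rule cong_mult) simp
  moreover have "b ^ (p - 1) * b = b ^ p" using p prime_gt_0_nat
    by (metis Suc_diff_1 power_Suc2)
  ultimately show ?thesis by simp
qed

definition sig :: "nat \<Rightarrow> nat \<Rightarrow> nat list list \<Rightarrow> nat list list" where
  "sig c a ms = take c ms @ rotate a (drop c ms)"

lemma sig_pow: "c \<le> length ms \<Longrightarrow> (sig c a ^^ n) ms = take c ms @ rotate (n*a) (drop c ms)"
proof (induction n)
  case (Suc n)
  have "(sig c a ^^ Suc n) ms = sig c a (take c ms @ rotate (n*a) (drop c ms))"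
    using Suc by simp
  also have "\<dots> = take c ms @ rotate a (rotate (n*a) (drop c ms))"
    using Suc.prems by (simp add: sig_def)
  also have "\<dots> = take c ms @ rotate (Suc n * a) (drop c ms)"
    by (simp add: rotate_rotate)
  finally show ?case .
qed simp

lemma step:
  assumes p: "prime p" and x: "x \<in> box N L"
  shows "[gbinom N f (c + p*a) x =
    (\<Sum>pre\<in>BL N L c. \<Sum>w\<in>BL N L a. if \<forall>j<N. cs pre j + p * cs w j = x!j
        then prod_list (map f pre) * prod_list (map f w) else 0)] (mod p)"
proof -
  have p0: "p > 0" using p prime_gt_0_nat by blast
  define S where "S = BL N L (c + p*a)"
  define wt where "wt ms = (if \<forall>j<N. cs ms j = x!j then prod_list (map f ms) else 0)" for ms
  define \<sigma> where "\<sigma> = sig c a"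
  have g: "gbinom N f (c + p*a) x = sum wt S"
    unfolding S_def wt_def by (rule gbinom_box[OF x])
  have csig: "cs (\<sigma> ms) j = cs ms j" if "ms \<in> S" for ms j
  proof -
    have "cs ms j = cs (take c ms @ drop c ms) j" by simp
    then show ?thesis unfolding \<sigma>_def sig_def by (simp only: cs_append cs_rotate)
  qed
  have psig: "prod_list (map f (\<sigma> ms)) = prod_list (map f ms)" if "ms \<in> S" for ms
  proof -
    have "prod_list (map f ms) = prod_list (map f (take c ms)) * prod_list (map f (drop c ms))"
      by (metis append_take_drop_id map_append prod_list.append)
    then show ?thesis unfolding \<sigma>_def sig_def
      by (simp add: rotate_map[symmetric] prod_list_rotate)
  qed
  have setsig: "set (\<sigma> ms) = set ms" for ms
  proof -
    have "set ms = set (take c ms @ drop c ms)" by simp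
    then show ?thesis unfolding \<sigma>_def sig_def by (simp only: set_append set_rotate)
  qed
  have inv: "\<sigma> ` S \<subseteq> S"
  proof
    fix u assume "u \<in> \<sigma> ` S"
    then obtain ms where ms: "ms \<in> S" "u = \<sigma> ms" by auto
    have "length (\<sigma> ms) = length ms" using ms unfolding S_def BL_def \<sigma>_def sig_def by auto
    then show "u \<in> S" using ms setsig[of ms] unfolding S_def BL_def by auto
  qed
  have per: "\<forall>s\<in>S. (\<sigma>^^p) s = s"
  proof
    fix ms assume ms: "ms \<in> S"
    have l: "length ms = c + p*a" using ms by (simp add: S_def BL_def)
    have "(\<sigma>^^p) ms = take c ms @ rotate (p*a) (drop c ms)"
      unfolding \<sigma>_def by (rule sig_pow) (use l in simp)
    also have "rotate (p*a) (drop c ms) = drop c ms" using l by simp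
    finally show "(\<sigma>^^p) ms = ms" by simp
  qed
  have winv: "\<forall>s\<in>S. wt (\<sigma> s) = wt s"
    using csig psig unfolding wt_def by auto
  have c1: "[sum wt S = sum wt {s\<in>S. \<sigma> s = s}] (mod p)"
    by (rule orbit_cong[OF p _ inv per winv]) (simp add: S_def finite_BL)
  define rep where "rep = (\<lambda>(pre::nat list list, w::nat list list). pre @ concat (replicate p w))"
  define spl where "spl = (\<lambda>ms::nat list list. (take c ms, take a (drop c ms)))"
  have fixchar: "\<sigma> ms = ms \<longleftrightarrow> rotate a (drop c ms) = drop c ms" for ms
  proof -
    have "\<sigma> ms = ms \<longleftrightarrow> take c ms @ rotate a (drop c ms) = take c ms @ drop c ms"
      unfolding \<sigma>_def sig_def by (simp only: append_take_drop_id)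
    then show ?thesis by (simp only: same_append_eq)
  qed
  have sfix: "sum wt {s\<in>S. \<sigma> s = s} = (\<Sum>q\<in>BL N L c \<times> BL N L a. wt (rep q))"
  proof (rule sum.reindex_bij_witness[where i = rep and j = spl])
    fix ms assume ms: "ms \<in> {s\<in>S. \<sigma> s = s}"
    have l: "length ms = c + p*a" using ms by (simp add: S_def BL_def)
    have r: "rotate a (drop c ms) = drop c ms" using ms fixchar by simp
    have d: "drop c ms = concat (replicate p (take a (drop c ms)))"
      by (rule rot_fixed) (use l r p0 in auto)
    show "rep (spl ms) = ms" unfolding rep_def spl_def using d
      by (metis append_take_drop_id case_prod_conv)
    have "a \<le> p*a" using p0 by simp
    hence "length (take a (drop c ms)) = a" using l by simp
    moreover have "set (take c ms) \<subseteq> box N L" "set (take a (drop c ms)) \<subseteq> box N L"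
      using ms by (auto simp: S_def BL_def dest: in_set_takeD in_set_dropD)
    ultimately show "spl ms \<in> BL N L c \<times> BL N L a" using l unfolding spl_def BL_def by auto
    show "wt (rep (spl ms)) = wt ms" using \<open>rep (spl ms) = ms\<close> by simp
  next
    fix q assume q: "q \<in> BL N L c \<times> BL N L a"
    obtain pre w where qq: "q = (pre, w)" by (cases q)
    have pw: "length pre = c" "length w = a" "set pre \<subseteq> box N L" "set w \<subseteq> box N L"
      using q qq by (auto simp: BL_def)
    have tk: "take a (concat (replicate p w)) = w" using p0 pw(2)
      by (cases p) auto
    show "spl (rep q) = q" unfolding rep_def spl_def qq using pw tk by simp
    have len: "length (rep q) = c + p*a" unfolding rep_def qq using pw
      by (simp add: length_concat sum_list_replicate)
    have st: "set (rep q) \<subseteq> box N L" unfolding rep_def qq using pw by auto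
    have "\<sigma> (rep q) = rep q" unfolding fixchar rep_def qq using pw rot_rep[OF pw(2)] by simp
    then show "rep q \<in> {s\<in>S. \<sigma> s = s}" using len st by (simp add: S_def BL_def)
  qed
  have wrep: "wt (rep (pre, w)) = (if \<forall>j<N. cs pre j + p * cs w j = x!j
        then prod_list (map f pre) * prod_list (map f w) ^ p else 0)" for pre w
    unfolding wt_def rep_def by (auto simp: prod_rep)
  have c2: "[(\<Sum>q\<in>BL N L c \<times> BL N L a. wt (rep q)) =
     (\<Sum>q\<in>BL N L c \<times> BL N L a. (case q of (pre, w) \<Rightarrow> if \<forall>j<N. cs pre j + p * cs w j = x!j
        then prod_list (map f pre) * prod_list (map f w) else 0))] (mod p)"
  proof (rule cong_sum)
    fix q assume "q \<in> BL N L c \<times> BL N L a"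
    obtain pre w where qq: "q = (pre, w)" by (cases q)
    have "[prod_list (map f pre) * prod_list (map f w) ^ p = prod_list (map f pre) * prod_list (map f w)] (mod p)"
      by (rule cong_mult) (simp_all add: pow_p_cong[OF p])
    then show "[wt (rep q) = (case q of (pre, w) \<Rightarrow> if \<forall>j<N. cs pre j + p * cs w j = x!j
        then prod_list (map f pre) * prod_list (map f w) else 0)] (mod p)"
      unfolding qq wrep by auto
  qed
  have e3: "(\<Sum>q\<in>BL N L c \<times> BL N L a. (case q of (pre, w) \<Rightarrow> if \<forall>j<N. cs pre j + p * cs w j = x!j
        then prod_list (map f pre) * prod_list (map f w) else 0)) =
    (\<Sum>pre\<in>BL N L c. \<Sum>w\<in>BL N L a. if \<forall>j<N. cs pre j + p * cs w j = x!j
        then prod_list (map f pre) * prod_list (map f w) else 0)"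
    by (rule sum.cartesian_product[symmetric])
  show ?thesis using c1 c2 unfolding g sfix e3 by (rule cong_trans)
qed



lemma sum_box_unique:
  "(\<Sum>u\<in>box N L. if \<forall>j<N. u!j = g j then h u else 0) =
   (if \<forall>j<N. g j \<le> L!j then h (map g [0..<N]) else (0::'a::comm_monoid_add))"
proof -
  have e: "{u\<in>box N L. \<forall>j<N. u!j = g j} = (if \<forall>j<N. g j \<le> L!j then {map g [0..<N]} else {})"
  proof (cases "\<forall>j<N. g j \<le> L!j")
    case True
    have "{u\<in>box N L. \<forall>j<N. u!j = g j} = {map g [0..<N]}"
    proof (rule subset_antisym; rule subsetI)
      fix u assume u: "u \<in> {u\<in>box N L. \<forall>j<N. u!j = g j}"
      have "u = map g [0..<N]"
      proof (rule nth_equalityI)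
        show "length u = length (map g [0..<N])" using u by (simp add: box_def)
        fix i assume "i < length u"
        then show "u ! i = map g [0..<N] ! i" using u by (simp add: box_def)
      qed
      then show "u \<in> {map g [0..<N]}" by simp
    next
      fix u assume "u \<in> {map g [0..<N]}"
      then show "u \<in> {u\<in>box N L. \<forall>j<N. u!j = g j}" using True by (simp add: box_def)
    qed
    then show ?thesis using True by simp
  next
    case False
    then obtain j where j: "j < N" "\<not> g j \<le> L!j" by blast
    have E: "{u\<in>box N L. \<forall>j<N. u!j = g j} = {}"
    proof (rule ccontr)
      assume "{u\<in>box N L. \<forall>j<N. u!j = g j} \<noteq> {}"
      then obtain u where "u \<in> box N L" "\<forall>j<N. u!j = g j" by blast
      then show False using j by (simp add: box_def)
    qed
    show ?thesis by (subst if_not_P[OF False]) (rule E)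
  qed
  show ?thesis
    by (cases "\<forall>j<N. g j \<le> L!j") (auto simp add: sum.inter_filter[OF finite_box, symmetric] e)
qed

lemma if_mult_if: "(if a then x else 0) * (if b then y else (0::nat)) = (if a then if b then x*y else 0 else 0)"
  by simp

lemma step2:
  assumes p: "prime p" and x: "x \<in> box N L"
  shows "(\<Sum>pre\<in>BL N L c. \<Sum>w\<in>BL N L a. if \<forall>j<N. cs pre j + p * cs w j = x!j
        then prod_list (map f pre) * prod_list (map f w) else 0) =
    (\<Sum>u\<in>box N L. \<Sum>v\<in>box N L. if \<forall>j<N. u!j + p * v!j = x!j
        then gbinom N f c u * gbinom N f a v else 0)"
proof -
  have p0: "p > 0" using p prime_gt_0_nat by blast
  define B where "B = box N L"
  define P where "P ms = prod_list (map f ms)" for ms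
  define T where "T u v pre w = (if \<forall>j<N. u!j = cs pre j then (if \<forall>j<N. v!j = cs w j then
     (if \<forall>j<N. u!j + p * v!j = x!j then P pre * P w else 0) else 0) else (0::nat))" for u v pre w
  have "(\<Sum>u\<in>B. \<Sum>v\<in>B. if \<forall>j<N. u!j + p * v!j = x!j
        then gbinom N f c u * gbinom N f a v else 0) =
        (\<Sum>u\<in>B. \<Sum>v\<in>B. \<Sum>pre\<in>BL N L c. \<Sum>w\<in>BL N L a. T u v pre w)"
  proof (intro sum.cong refl)
    fix u v assume uv: "u \<in> B" "v \<in> B"
    have "gbinom N f c u * gbinom N f a v =
      (\<Sum>pre\<in>BL N L c. \<Sum>w\<in>BL N L a. (if \<forall>j<N. cs pre j = u!j then P pre else 0) *
          (if \<forall>j<N. cs w j = v!j then P w else 0))"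
      unfolding gbinom_box[OF uv(1)[unfolded B_def]] gbinom_box[OF uv(2)[unfolded B_def]] P_def
      by (rule sum_product)
    then show "(if \<forall>j<N. u!j + p * v!j = x!j then gbinom N f c u * gbinom N f a v else 0) =
        (\<Sum>pre\<in>BL N L c. \<Sum>w\<in>BL N L a. T u v pre w)"
    proof (cases "\<forall>j<N. u!j + p * v!j = x!j")
      case True
      have e1: "(\<forall>j<N. cs pre j = u!j) = (\<forall>j<N. u!j = cs pre j)" for pre by auto
      have e2: "(\<forall>j<N. cs w j = v!j) = (\<forall>j<N. v!j = cs w j)" for w by auto
      show ?thesis unfolding if_P[OF True] \<open>gbinom N f c u * gbinom N f a v = _\<close>
        by (intro sum.cong refl) (simp only: T_def e1 e2 if_P[OF True] if_mult_if)
    next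
      case False
      show ?thesis unfolding T_def by (simp only: if_not_P[OF False] if_False if_cancel sum.neutral_const)
    qed
  qed
  also have "\<dots> = (\<Sum>u\<in>B. \<Sum>pre\<in>BL N L c. \<Sum>v\<in>B. \<Sum>w\<in>BL N L a. T u v pre w)"
    by (rule sum.cong[OF refl], rule sum.swap)
  also have "\<dots> = (\<Sum>pre\<in>BL N L c. \<Sum>u\<in>B. \<Sum>v\<in>B. \<Sum>w\<in>BL N L a. T u v pre w)"
    by (rule sum.swap)
  also have "\<dots> = (\<Sum>pre\<in>BL N L c. \<Sum>u\<in>B. \<Sum>w\<in>BL N L a. \<Sum>v\<in>B. T u v pre w)"
    by (rule sum.cong[OF refl], rule sum.cong[OF refl], rule sum.swap)
  also have "\<dots> = (\<Sum>pre\<in>BL N L c. \<Sum>w\<in>BL N L a. \<Sum>u\<in>B. \<Sum>v\<in>B. T u v pre w)"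
    by (rule sum.cong[OF refl], rule sum.swap)
  also have "\<dots> = (\<Sum>pre\<in>BL N L c. \<Sum>w\<in>BL N L a. if \<forall>j<N. cs pre j + p * cs w j = x!j
        then P pre * P w else 0)"
  proof (intro sum.cong refl)
    fix pre w
    have inner: "(\<Sum>v\<in>B. T u v pre w) = (if \<forall>j<N. u!j = cs pre j then
       (if \<forall>j<N. cs w j \<le> L!j then (if \<forall>j<N. u!j + p * cs w j = x!j then P pre * P w else 0) else 0) else 0)" for u
    proof -
      have "(\<Sum>v\<in>B. T u v pre w) = (if \<forall>j<N. u!j = cs pre j then (\<Sum>v\<in>B. if \<forall>j<N. v!j = cs w j then
         (if \<forall>j<N. u!j + p * v!j = x!j then P pre * P w else 0) else 0) else 0)"
      proof (cases "\<forall>j<N. u!j = cs pre j")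
        case True then show ?thesis unfolding T_def by (simp only: if_P[OF True])
      next
        case False then show ?thesis unfolding T_def by (simp only: if_not_P[OF False] if_False sum.neutral_const)
      qed
      also have "\<dots> = (if \<forall>j<N. u!j = cs pre j then
       (if \<forall>j<N. cs w j \<le> L!j then (if \<forall>j<N. u!j + p * (map (cs w) [0..<N])!j = x!j then P pre * P w else 0) else 0) else 0)"
        unfolding B_def by (simp only: sum_box_unique)
      also have "\<dots> = (if \<forall>j<N. u!j = cs pre j then
       (if \<forall>j<N. cs w j \<le> L!j then (if \<forall>j<N. u!j + p * cs w j = x!j then P pre * P w else 0) else 0) else 0)"
      proof -
        have cnd: "(\<forall>j<N. u!j + p * (map (cs w) [0..<N])!j = x!j) = (\<forall>j<N. u!j + p * cs w j = x!j)"
          by auto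
        show ?thesis by (simp only: cnd)
      qed
      finally show ?thesis .
    qed
    have "(\<Sum>u\<in>B. \<Sum>v\<in>B. T u v pre w) = (\<Sum>u\<in>B. if \<forall>j<N. u!j = cs pre j then
       (if \<forall>j<N. cs w j \<le> L!j then (if \<forall>j<N. u!j + p * cs w j = x!j then P pre * P w else 0) else 0) else 0)"
      by (simp only: inner)
    also have "\<dots> = (if \<forall>j<N. cs pre j \<le> L!j then (if \<forall>j<N. cs w j \<le> L!j then
        (if \<forall>j<N. (map (cs pre) [0..<N])!j + p * cs w j = x!j then P pre * P w else 0) else 0) else 0)"
      unfolding B_def by (rule sum_box_unique)
    also have "\<dots> = (if \<forall>j<N. cs pre j + p * cs w j = x!j then P pre * P w else 0)"
    proof -
      have cnd: "(\<forall>j<N. (map (cs pre) [0..<N])!j + p * cs w j = x!j) = (\<forall>j<N. cs pre j + p * cs w j = x!j)"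
        by auto
      show ?thesis
      proof (cases "\<forall>j<N. cs pre j + p * cs w j = x!j")
        case h: True
        have xl: "\<forall>j<N. x!j \<le> L!j" using x by (simp add: box_def)
        have A: "\<forall>j<N. cs pre j \<le> L!j"
        proof (intro allI impI)
          fix j assume j: "j < N"
          have "cs pre j \<le> cs pre j + p * cs w j" by (rule le_add1)
          also have "\<dots> = x!j" using h j by blast
          also have "\<dots> \<le> L!j" using xl j by blast
          finally show "cs pre j \<le> L!j" .
        qed
        have B: "\<forall>j<N. cs w j \<le> L!j"
        proof (intro allI impI)
          fix j assume j: "j < N"
          have "cs w j \<le> p * cs w j" using p0 by simp
          also have "\<dots> \<le> cs pre j + p * cs w j" by (rule le_add2)
          also have "\<dots> = x!j" using h j by blast
          also have "\<dots> \<le> L!j" using xl j by blast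
          finally show "cs w j \<le> L!j" .
        qed
        show ?thesis by (simp only: cnd if_P[OF A] if_P[OF B] if_P[OF h])
      next
        case False
        show ?thesis by (simp only: cnd if_not_P[OF False] if_False if_cancel)
      qed
    qed
    finally show "(\<Sum>u\<in>B. \<Sum>v\<in>B. T u v pre w) = (if \<forall>j<N. cs pre j + p * cs w j = x!j
        then P pre * P w else 0)" .
  qed
  finally show ?thesis unfolding B_def P_def by (rule sym)
qed



lemma stepG:
  assumes p: "prime p" and x: "x \<in> box N L"
  shows "[gbinom N f (c + p*a) x = (\<Sum>u\<in>box N L. \<Sum>v\<in>box N L. if \<forall>j<N. u!j + p * v!j = x!j
        then gbinom N f c u * gbinom N f a v else 0)] (mod p)"
  using step[OF p x, where f=f and c=c and a=a] step2[OF p x, where f=f and c=c and a=a] by simp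

lemma BL_0: "BL N L 0 = {[]}"
  by (auto simp: BL_def)

lemma sum_BL_Suc: "(\<Sum>ms\<in>BL N L (Suc n). g ms) = (\<Sum>u\<in>box N L. \<Sum>ms\<in>BL N L n. g (u#ms))"
proof -
  have e: "BL N L (Suc n) = (\<lambda>(u,ms). u#ms) ` (box N L \<times> BL N L n)"
  proof (rule subset_antisym; rule subsetI)
    fix ms assume "ms \<in> BL N L (Suc n)"
    then obtain u ms' where "ms = u # ms'" "length ms' = n" "u \<in> box N L" "set ms' \<subseteq> box N L"
      by (auto simp: BL_def length_Suc_conv)
    then show "ms \<in> (\<lambda>(u,ms). u#ms) ` (box N L \<times> BL N L n)"
      by (auto simp: BL_def image_iff)
  next
    fix ms assume "ms \<in> (\<lambda>(u,ms). u#ms) ` (box N L \<times> BL N L n)"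
    then show "ms \<in> BL N L (Suc n)" by (auto simp: BL_def)
  qed
  have inj: "inj_on (\<lambda>(u,ms). u#ms) (box N L \<times> BL N L n)"
    by (auto simp: inj_on_def)
  show ?thesis unfolding e sum.reindex[OF inj] sum.cartesian_product by (simp add: case_prod_beta)
qed

definition R :: "nat \<Rightarrow> (nat list \<Rightarrow> nat) \<Rightarrow> nat \<Rightarrow> nat list \<Rightarrow> nat \<Rightarrow> (nat \<Rightarrow> nat) \<Rightarrow> nat list \<Rightarrow> nat" where
  "R N f p L r kd l = (\<Sum>ms\<in>BL N L (Suc r). if \<forall>j<N. (\<Sum>i\<le>r. p^i * (ms!i)!j) = l!j
      then (\<Prod>i\<le>r. gbinom N f (kd i) (ms!i)) else 0)"

lemma R_base:
  assumes l: "l \<in> box N L"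
  shows "R N f p L 0 kd l = gbinom N f (kd 0) l"
proof -
  have "R N f p L 0 kd l = (\<Sum>u\<in>box N L. if \<forall>j<N. u!j = l!j then gbinom N f (kd 0) u else 0)"
    unfolding R_def sum_BL_Suc BL_0 by (simp cong: if_cong)
  also have "\<dots> = (if \<forall>j<N. l!j \<le> L!j then gbinom N f (kd 0) (map ((!) l) [0..<N]) else 0)"
    by (rule sum_box_unique)
  also have "\<dots> = gbinom N f (kd 0) l"
  proof -
    have "length l = N" "\<forall>j<N. l!j \<le> L!j" using l by (auto simp: box_def)
    moreover have "map ((!) l) [0..<length l] = l" by (rule map_nth)
    ultimately show ?thesis by simp
  qed
  finally show ?thesis .
qed



lemma mult_if0: "(c::nat) * (if a then x else 0) = (if a then c * x else 0)"
  by simp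

lemma R_step:
  assumes p0: "p > 0" and l: "l \<in> box N L"
  shows "(\<Sum>u\<in>box N L. \<Sum>v\<in>box N L. if \<forall>j<N. u!j + p * v!j = l!j
        then gbinom N f (kd 0) u * R N f p L r (\<lambda>i. kd (Suc i)) v else 0) = R N f p L (Suc r) kd l"
proof -
  define B where "B = box N L"
  define S where "S ms j = (\<Sum>i\<le>r. p^i * (ms!i)!j)" for ms j
  define Q where "Q ms = (\<Prod>i\<le>r. gbinom N f (kd (Suc i)) (ms!i))" for ms
  define G where "G u = gbinom N f (kd 0) u" for u
  define T where "T u v ms = (if \<forall>j<N. v!j = S ms j then
      (if \<forall>j<N. u!j + p * v!j = l!j then G u * Q ms else 0) else 0)" for u v ms
  have "(\<Sum>u\<in>box N L. \<Sum>v\<in>box N L. if \<forall>j<N. u!j + p * v!j = l!j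
        then gbinom N f (kd 0) u * R N f p L r (\<lambda>i. kd (Suc i)) v else 0) =
     (\<Sum>u\<in>B. \<Sum>v\<in>B. \<Sum>ms\<in>BL N L (Suc r). T u v ms)"
    unfolding B_def
  proof (intro sum.cong refl)
    fix u v
    show "(if \<forall>j<N. u!j + p * v!j = l!j then gbinom N f (kd 0) u * R N f p L r (\<lambda>i. kd (Suc i)) v else 0) =
       (\<Sum>ms\<in>BL N L (Suc r). T u v ms)"
    proof (cases "\<forall>j<N. u!j + p * v!j = l!j")
      case True
      have e1: "(\<forall>j<N. (\<Sum>i\<le>r. p^i * (ms!i)!j) = v!j) = (\<forall>j<N. v!j = (\<Sum>i\<le>r. p^i * (ms!i)!j))" for ms by auto
      show ?thesis unfolding if_P[OF True] R_def sum_distrib_left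
        by (intro sum.cong refl) (simp only: T_def e1 if_P[OF True] mult_if0 G_def Q_def S_def mult_0_right)
    next
      case False
      show ?thesis unfolding T_def by (simp only: if_not_P[OF False] if_False if_cancel sum.neutral_const)
    qed
  qed
  also have "\<dots> = (\<Sum>u\<in>B. \<Sum>ms\<in>BL N L (Suc r). \<Sum>v\<in>B. T u v ms)"
    by (rule sum.cong[OF refl], rule sum.swap)
  also have "\<dots> = (\<Sum>u\<in>B. \<Sum>ms\<in>BL N L (Suc r). if \<forall>j<N. u!j + p * S ms j = l!j then G u * Q ms else 0)"
  proof (intro sum.cong refl)
    fix u ms
    have "(\<Sum>v\<in>B. T u v ms) = (if \<forall>j<N. S ms j \<le> L!j then
       (if \<forall>j<N. u!j + p * (map (S ms) [0..<N])!j = l!j then G u * Q ms else 0) else 0)"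
      unfolding T_def B_def by (rule sum_box_unique)
    also have "\<dots> = (if \<forall>j<N. u!j + p * S ms j = l!j then G u * Q ms else 0)"
    proof -
      have cnd: "(\<forall>j<N. u!j + p * (map (S ms) [0..<N])!j = l!j) = (\<forall>j<N. u!j + p * S ms j = l!j)"
        by auto
      show ?thesis
      proof (cases "\<forall>j<N. u!j + p * S ms j = l!j")
        case h: True
        have xl: "\<forall>j<N. l!j \<le> L!j" using l by (simp add: box_def)
        have Bd: "\<forall>j<N. S ms j \<le> L!j"
        proof (intro allI impI)
          fix j assume j: "j < N"
          have "S ms j \<le> p * S ms j" using p0 by simp
          also have "\<dots> \<le> u!j + p * S ms j" by (rule le_add2)
          also have "\<dots> = l!j" using h j by blast
          also have "\<dots> \<le> L!j" using xl j by blast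
          finally show "S ms j \<le> L!j" .
        qed
        show ?thesis by (simp only: cnd if_P[OF Bd] if_P[OF h])
      next
        case False
        show ?thesis by (simp only: cnd if_not_P[OF False] if_False if_cancel)
      qed
    qed
    finally show "(\<Sum>v\<in>B. T u v ms) = (if \<forall>j<N. u!j + p * S ms j = l!j then G u * Q ms else 0)" .
  qed
  also have "\<dots> = R N f p L (Suc r) kd l"
    unfolding R_def sum_BL_Suc B_def
  proof (intro sum.cong refl)
    fix u ms
    have s: "(\<Sum>i\<le>Suc r. p^i * ((u#ms)!i)!j) = u!j + p * S ms j" for j
      unfolding S_def sum.atMost_Suc_shift by (simp add: sum_distrib_left mult.assoc)
    have q: "(\<Prod>i\<le>Suc r. gbinom N f (kd i) ((u#ms)!i)) = G u * Q ms"
      unfolding G_def Q_def prod.atMost_Suc_shift by simp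
    show "(if \<forall>j<N. u!j + p * S ms j = l!j then G u * Q ms else 0) =
      (if \<forall>j<N. (\<Sum>i\<le>Suc r. p^i * ((u#ms)!i)!j) = l!j then \<Prod>i\<le>Suc r. gbinom N f (kd i) ((u#ms)!i) else 0)"
      by (simp only: s q)
  qed
  finally show ?thesis .
qed



lemma main:
  assumes p: "prime p"
  shows "l \<in> box N L \<Longrightarrow> [gbinom N f (\<Sum>j\<le>r. kd j * p^j) l = R N f p L r kd l] (mod p)"
proof (induction r arbitrary: kd l)
  case 0
  then show ?case using R_base[OF 0] by simp
next
  case (Suc r)
  have p0: "p > 0" using p prime_gt_0_nat by blast
  have k: "(\<Sum>j\<le>Suc r. kd j * p^j) = kd 0 + p * (\<Sum>j\<le>r. kd (Suc j) * p^j)"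
    unfolding sum.atMost_Suc_shift by (simp add: sum_distrib_left mult.left_commute)
  have c1: "[gbinom N f (\<Sum>j\<le>Suc r. kd j * p^j) l =
     (\<Sum>u\<in>box N L. \<Sum>v\<in>box N L. if \<forall>j<N. u!j + p * v!j = l!j
        then gbinom N f (kd 0) u * gbinom N f (\<Sum>j\<le>r. kd (Suc j) * p^j) v else 0)] (mod p)"
    unfolding k by (rule stepG[OF p Suc.prems])
  have c2: "[(\<Sum>u\<in>box N L. \<Sum>v\<in>box N L. if \<forall>j<N. u!j + p * v!j = l!j
        then gbinom N f (kd 0) u * gbinom N f (\<Sum>j\<le>r. kd (Suc j) * p^j) v else 0) = (\<Sum>u\<in>box N L. \<Sum>v\<in>box N L. if \<forall>j<N. u!j + p * v!j = l!j
        then gbinom N f (kd 0) u * R N f p L r (\<lambda>i. kd (Suc i)) v else 0)] (mod p)"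
  proof (intro cong_sum)
    fix u v assume v: "v \<in> box N L"
    have IH: "[gbinom N f (\<Sum>j\<le>r. kd (Suc j) * p^j) v = R N f p L r (\<lambda>i. kd (Suc i)) v] (mod p)"
      using Suc.IH[OF v] by simp
    show "[(if \<forall>j<N. u!j + p * v!j = l!j
        then gbinom N f (kd 0) u * gbinom N f (\<Sum>j\<le>r. kd (Suc j) * p^j) v else 0) =
        (if \<forall>j<N. u!j + p * v!j = l!j
        then gbinom N f (kd 0) u * R N f p L r (\<lambda>i. kd (Suc i)) v else 0)] (mod p)"
      using cong_mult[OF cong_refl IH] by auto
  qed
  have e3: "(\<Sum>u\<in>box N L. \<Sum>v\<in>box N L. if \<forall>j<N. u!j + p * v!j = l!j
        then gbinom N f (kd 0) u * R N f p L r (\<lambda>i. kd (Suc i)) v else 0) = R N f p L (Suc r) kd l"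
    by (rule R_step[OF p0 Suc.prems])
  show ?case using cong_trans[OF c1 c2] unfolding e3 .
qed

theorem theorem13:
  fixes N :: nat and f :: "nat list \<Rightarrow> nat" and p k r :: nat
    and kd :: "nat \<Rightarrow> nat" and l :: "nat list"
  assumes "N \<ge> 1"
    and "prime p"
    and "\<forall>j\<le>r. kd j < p"
    and "k = (\<Sum>j\<le>r. kd j * p ^ j)"
    and "l \<in> natvecs N"
  shows "[gbinom N f k l =
           (\<Sum>ms \<in> {ms. length ms = Suc r \<and> set ms \<subseteq> natvecs N \<and>
                       vsum N (map (\<lambda>i. vscale (p ^ i) (ms ! i)) [0..<Suc r]) = l}.
              \<Prod>i\<le>r. gbinom N f (kd i) (ms ! i))] (mod p)"
proof -
  have ll: "length l = N" using assms(5) by (simp add: natvecs_def)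
  have lb: "l \<in> box N l" using ll by (simp add: box_def)
  have c: "[gbinom N f k l = R N f p l r kd l] (mod p)" unfolding assms(4) by (rule main[OF assms(2) lb])
  define S where "S ms j = (\<Sum>i\<le>r. p^i * (ms!i)!j)" for ms j
  have cseq: "cs (map (\<lambda>i. vscale (p ^ i) (ms ! i)) [0..<Suc r]) j = S ms j"
    if "length ms = Suc r" "set ms \<subseteq> natvecs N" "j < N" for ms j
  proof -
    have "cs (map (\<lambda>i. vscale (p ^ i) (ms ! i)) [0..<Suc r]) j =
        sum_list (map (\<lambda>i. vscale (p ^ i) (ms ! i) ! j) [0..<Suc r])"
      unfolding cs_def by (simp add: comp_def)
    also have "\<dots> = (\<Sum>i\<in>{0..<Suc r}. vscale (p ^ i) (ms ! i) ! j)"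
      by (simp only: atLeastLessThan_upt sum_set_upt_conv_sum_list_nat)
    also have "\<dots> = (\<Sum>i\<le>r. p^i * (ms!i)!j)"
    proof (rule sum.cong)
      show "{0..<Suc r} = {..r}" by auto
    next
      fix i assume "i \<in> {..r}"
      hence "ms!i \<in> set ms" using that(1) by simp
      hence "length (ms!i) = N" using that(2) by (auto simp: natvecs_def)
      then show "vscale (p ^ i) (ms ! i) ! j = p^i * (ms!i)!j" using that(3) by (simp add: vscale_def)
    qed
    finally show ?thesis unfolding S_def .
  qed
  have A: "{ms. length ms = Suc r \<and> set ms \<subseteq> natvecs N \<and>
                       vsum N (map (\<lambda>i. vscale (p ^ i) (ms ! i)) [0..<Suc r]) = l} =
      {ms\<in>BL N l (Suc r). \<forall>j<N. S ms j = l!j}"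
  proof (rule subset_antisym; rule subsetI)
    fix ms assume "ms \<in> {ms. length ms = Suc r \<and> set ms \<subseteq> natvecs N \<and>
                       vsum N (map (\<lambda>i. vscale (p ^ i) (ms ! i)) [0..<Suc r]) = l}"
    hence ms: "length ms = Suc r" "set ms \<subseteq> natvecs N" "\<forall>j<N. S ms j = l!j"
      using vsum_eq[OF ll] cseq by auto
    have "set ms \<subseteq> box N l"
    proof
      fix m assume m: "m \<in> set ms"
      then obtain i where i: "i < Suc r" "m = ms!i" using ms(1) by (auto simp: in_set_conv_nth)
      have "\<forall>j<N. m!j \<le> l!j"
      proof (intro allI impI)
        fix j assume j: "j < N"
        have "p^i > 0" using assms(2) prime_gt_0_nat by simp
        hence "1 * m!j \<le> p^i * m!j" by (intro mult_le_mono1) linarith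
        hence "m!j \<le> p^i * m!j" by simp
        also have "\<dots> = p^i * (ms!i)!j" using i by simp
        also have "\<dots> \<le> S ms j" unfolding S_def
          by (rule member_le_sum[where f="\<lambda>i. p^i * (ms!i)!j"]) (use i in auto)
        also have "\<dots> = l!j" using ms(3) j by simp
        finally show "m!j \<le> l!j" .
      qed
      then show "m \<in> box N l" using m ms(2) by (auto simp: box_def natvecs_def)
    qed
    then show "ms \<in> {ms\<in>BL N l (Suc r). \<forall>j<N. S ms j = l!j}" using ms by (simp add: BL_def)
  next
    fix ms assume "ms \<in> {ms\<in>BL N l (Suc r). \<forall>j<N. S ms j = l!j}"
    hence ms: "length ms = Suc r" "set ms \<subseteq> natvecs N" "\<forall>j<N. S ms j = l!j"
      by (auto simp: BL_def box_def natvecs_def)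
    then show "ms \<in> {ms. length ms = Suc r \<and> set ms \<subseteq> natvecs N \<and>
                       vsum N (map (\<lambda>i. vscale (p ^ i) (ms ! i)) [0..<Suc r]) = l}"
      using vsum_eq[OF ll] cseq by auto
  qed
  have "R N f p l r kd l = (\<Sum>ms\<in>{ms\<in>BL N l (Suc r). \<forall>j<N. S ms j = l!j}. \<Prod>i\<le>r. gbinom N f (kd i) (ms ! i))"
    unfolding R_def S_def by (rule sum.inter_filter[OF finite_BL, symmetric])
  with c A show ?thesis by simp
qed

end
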